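(* Let $J(P,Q)=\frac{D(P\|Q)+D(Q\|P)}{2}$ denote Jeffreys' divergence, with $P,Q$ ranging over pairs of probability distributions on a common countable set. Then (i) for every $\varepsilon\in[0,1)$, $\displaystyle\min_{P,Q:\ d_{\mathrm{TV}}(P,Q)=\varepsilon} J(P,Q)=\varepsilon\log\frac{1+\varepsilon}{1-\varepsilon}$, and this minimum is achieved by $P=\left(\frac{1-\varepsilon}{2},\frac{1+\varepsilon}{2}\right)$, $Q=\left(\frac{1+\varepsilon}{2},\frac{1-\varepsilon}{2}\right)$; (ii) for every $\varepsilon>0$, $\displaystyle\inf_{P,Q:\ D(P\|Q)=\varepsilon} J(P,Q)=\frac{\varepsilon}{2}$; (iii) the corresponding suprema, $\sup_{P,Q:\ d_{\mathrm{TV}}(P,Q)=\varepsilon}J(P,Q)$ for $\varepsilon\in(0,1)$ and $\sup_{P,Q:\ D(P\|Q)=\varepsilon}J(P,Q)$ for $\varepsilon>0$, are both $+\infty$.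
   Context: $d_{\mathrm{TV}}(P,Q)=\frac12\sum_x |P(x)-Q(x)|$; $D(P\|Q)=\sum_x P(x)\log\frac{P(x)}{Q(x)}$ is the relative entropy (possibly $+\infty$). Logarithms are natural. *)

theory Defs
  imports "HOL-Probability.Probability"
begin

definition dtv :: "'a pmf \<Rightarrow> 'a pmf \<Rightarrow> real" where
  "dtv P Q = (\<Sum>\<^sub>\<infinity>x. \<bar>pmf P x - pmf Q x\<bar>) / 2"

definition kl_term :: "'a pmf \<Rightarrow> 'a pmf \<Rightarrow> 'a \<Rightarrow> ereal" where
  "kl_term P Q x =
     (if pmf P x = 0 then 0
      else if pmf Q x = 0 then \<infinity>
      else ereal (pmf P x * ln (pmf P x / pmf Q x)))"

text \<open>Relative entropy D(P||Q) = sum over x of the summands, as an extended real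
  (possibly +infinity): sum of positive parts minus sum of negative parts
  (the latter is always finite).\<close>
definition kl_div :: "'a pmf \<Rightarrow> 'a pmf \<Rightarrow> ereal" where
  "kl_div P Q =
     enn2ereal (\<integral>\<^sup>+ x. e2ennreal (max 0 (kl_term P Q x)) \<partial>count_space UNIV)
   - enn2ereal (\<integral>\<^sup>+ x. e2ennreal (max 0 (- kl_term P Q x)) \<partial>count_space UNIV)"

definition jeffreys :: "'a pmf \<Rightarrow> 'a pmf \<Rightarrow> ereal" where
  "jeffreys P Q = (kl_div P Q + kl_div Q P) / 2"

definition two_point :: "'a \<Rightarrow> 'a \<Rightarrow> real \<Rightarrow> 'a pmf" where
  "two_point a b t = map_pmf (\<lambda>c. if c then b else a) (bernoulli_pmf t)"

end

theory Submission
  imports Defs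
begin


lemma pmf_summable_on: "pmf P summable_on A"
  using pmf_abs_summable[of P A] abs_summable_equivalent summable_on_iff_abs_summable_on_real by blast

lemma pmf_infsum: "infsum (pmf P) UNIV = 1"
  using infsetsum_infsum[OF pmf_abs_summable[of P UNIV]] infsetsum_pmf_eq_1[of P UNIV] by simp


lemma nn_summable:
  fixes g :: "'a \<Rightarrow> real"
  assumes "\<And>x. g x \<ge> 0" "(\<integral>\<^sup>+x. ennreal (g x) \<partial>count_space UNIV) \<noteq> \<infinity>"
  shows "g summable_on UNIV"
proof -
  have "(\<integral>\<^sup>+x. ennreal (norm (g x)) \<partial>count_space UNIV) = (\<integral>\<^sup>+x. ennreal (g x) \<partial>count_space UNIV)"
    using assms(1) by (intro nn_integral_cong) simp
  hence "(\<integral>\<^sup>+x. ennreal (norm (g x)) \<partial>count_space UNIV) < \<infinity>"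
    using assms(2) by (simp add: less_top)
  hence "integrable (count_space UNIV) g"
    by (intro integrableI_bounded) auto
  hence "Infinite_Set_Sum.abs_summable_on g UNIV" unfolding Infinite_Set_Sum.abs_summable_on_def .
  hence "Infinite_Sum.abs_summable_on g UNIV" using abs_summable_equivalent by blast
  thus ?thesis using summable_on_iff_abs_summable_on_real by blast
qed

lemma nn_infsum:
  fixes g :: "'a \<Rightarrow> real"
  assumes "\<And>x. g x \<ge> 0" "g summable_on UNIV"
  shows "(\<integral>\<^sup>+x. ennreal (g x) \<partial>count_space UNIV) = ennreal (infsum g UNIV)"
proof -
  have "Infinite_Sum.abs_summable_on g UNIV"
    using assms(2) summable_on_iff_abs_summable_on_real by blast
  hence a: "Infinite_Set_Sum.abs_summable_on g UNIV"
    using abs_summable_equivalent by blast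
  have "(\<integral>\<^sup>+x. ennreal (g x) \<partial>count_space UNIV) = ennreal (infsetsum g UNIV)"
    by (rule nn_integral_conv_infsetsum[OF a assms(1)])
  also have "infsetsum g UNIV = infsum g UNIV" by (rule infsetsum_infsum[OF a])
  finally show ?thesis .
qed

definition xl :: "real \<Rightarrow> real \<Rightarrow> real" where
  "xl u v = (if u = 0 then 0 else u * ln (u / v))"

lemma xl_ge:
  assumes "0 \<le> u" "0 \<le> v" "v = 0 \<Longrightarrow> u = 0"
  shows "xl u v \<ge> u - v"
proof (cases "u = 0")
  case True thus ?thesis using assms by (simp add: xl_def)
next
  case False
  hence u: "u > 0" and v: "v > 0" using assms by force+
  have "ln (v / u) \<le> v / u - 1" using u v by (intro ln_le_minus_one) simp
  hence "ln (u / v) \<ge> 1 - v / u" using u v by (simp add: ln_div)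
  hence "u * ln (u / v) \<ge> u * (1 - v / u)" using u by (intro mult_left_mono) auto
  also have "u * (1 - v / u) = u - v" using u by (simp add: field_simps)
  finally show ?thesis using False by (simp add: xl_def)
qed

lemma kl_term_real:
  assumes "pmf Q x = 0 \<Longrightarrow> pmf P x = 0"
  shows "kl_term P Q x = ereal (xl (pmf P x) (pmf Q x))"
  using assms by (auto simp: kl_term_def xl_def)

lemma kl_neg_le:
  "(\<integral>\<^sup>+ x. e2ennreal (max 0 (- kl_term P Q x)) \<partial>count_space UNIV) \<le> 1"
proof -
  have "(\<integral>\<^sup>+ x. e2ennreal (max 0 (- kl_term P Q x)) \<partial>count_space UNIV)
      \<le> (\<integral>\<^sup>+ x. ennreal (pmf Q x) \<partial>count_space UNIV)"
  proof (intro nn_integral_mono)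
    fix x
    have "max 0 (- kl_term P Q x) \<le> ereal (pmf Q x)"
    proof (cases "pmf P x = 0 \<or> pmf Q x = 0")
      case True thus ?thesis by (auto simp: kl_term_def)
    next
      case False
      hence "xl (pmf P x) (pmf Q x) \<ge> pmf P x - pmf Q x" by (intro xl_ge) auto
      hence "- xl (pmf P x) (pmf Q x) \<le> pmf Q x" using pmf_nonneg[of P x] by linarith
      moreover have "kl_term P Q x = ereal (xl (pmf P x) (pmf Q x))" using False by (intro kl_term_real) auto
      ultimately show ?thesis by simp
    qed
    from e2ennreal_mono[OF this] show "e2ennreal (max 0 (- kl_term P Q x)) \<le> ennreal (pmf Q x)" by simp
  qed
  also have "\<dots> = 1" unfolding nn_integral_pmf using measure_pmf.emeasure_space_1[of Q] by simp
  finally show ?thesis .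
qed

lemma e2_max0: "e2ennreal (max 0 (ereal r)) = ennreal (max 0 r)"
  by (simp only: ereal_max_0 e2ennreal_ereal)

lemma e2_max0': "e2ennreal (max 0 (- ereal r)) = ennreal (max 0 (- r))"
  by (simp only: uminus_ereal.simps ereal_max_0 e2ennreal_ereal)

lemma kl_real:
  assumes ac: "\<And>x. pmf Q x = 0 \<Longrightarrow> pmf P x = 0"
    and sm: "(\<lambda>x. xl (pmf P x) (pmf Q x)) summable_on UNIV"
  shows "kl_div P Q = ereal (\<Sum>\<^sub>\<infinity>x. xl (pmf P x) (pmf Q x))"
proof -
  define f where "f x = xl (pmf P x) (pmf Q x)" for x
  have nf: "(\<lambda>x. norm (f x)) summable_on UNIV"
    using summable_on_iff_abs_summable_on_real[THEN iffD1, OF sm] unfolding f_def .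
  have s1: "(\<lambda>x. max 0 (f x)) summable_on UNIV"
    by (rule summable_on_comparison_test[OF nf]) auto
  have s2: "(\<lambda>x. max 0 (- f x)) summable_on UNIV"
    by (rule summable_on_comparison_test[OF nf]) auto
  have e1: "(\<integral>\<^sup>+ x. e2ennreal (max 0 (kl_term P Q x)) \<partial>count_space UNIV)
      = (\<integral>\<^sup>+ x. ennreal (max 0 (f x)) \<partial>count_space UNIV)"
    by (intro nn_integral_cong) (simp only: kl_term_real[OF ac] f_def e2_max0)
  have e2: "(\<integral>\<^sup>+ x. e2ennreal (max 0 (- kl_term P Q x)) \<partial>count_space UNIV)
      = (\<integral>\<^sup>+ x. ennreal (max 0 (- f x)) \<partial>count_space UNIV)"
    by (intro nn_integral_cong) (simp only: kl_term_real[OF ac] f_def e2_max0')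
  have i1: "(\<integral>\<^sup>+ x. ennreal (max 0 (f x)) \<partial>count_space UNIV) = ennreal (infsum (\<lambda>x. max 0 (f x)) UNIV)"
    by (rule nn_infsum[OF _ s1]) simp
  have i2: "(\<integral>\<^sup>+ x. ennreal (max 0 (- f x)) \<partial>count_space UNIV) = ennreal (infsum (\<lambda>x. max 0 (- f x)) UNIV)"
    by (rule nn_infsum[OF _ s2]) simp
  have n1: "infsum (\<lambda>x. max 0 (f x)) UNIV \<ge> 0" by (rule infsum_nonneg) simp
  have n2: "infsum (\<lambda>x. max 0 (- f x)) UNIV \<ge> 0" by (rule infsum_nonneg) simp
  have "kl_div P Q = ereal (infsum (\<lambda>x. max 0 (f x)) UNIV) - ereal (infsum (\<lambda>x. max 0 (- f x)) UNIV)"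
    unfolding kl_div_def e1 e2 i1 i2 enn2ereal_ennreal[OF n1] enn2ereal_ennreal[OF n2] ..
  also have "\<dots> = ereal (infsum (\<lambda>x. max 0 (f x)) UNIV - infsum (\<lambda>x. max 0 (- f x)) UNIV)"
    by simp
  also have "infsum (\<lambda>x. max 0 (f x)) UNIV - infsum (\<lambda>x. max 0 (- f x)) UNIV
      = infsum (\<lambda>x. max 0 (f x) + - max 0 (- f x)) UNIV"
    using infsum_add[OF s1 summable_on_uminus[THEN iffD2, OF s2]] infsum_uminus[of "\<lambda>x. max 0 (- f x)"] by simp
  also have "(\<lambda>x. max 0 (f x) + - max 0 (- f x)) = f" by (auto simp: max_def)
  finally show ?thesis unfolding f_def .
qed


lemma my_summable_diff:
  fixes f g :: "'a \<Rightarrow> real"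
  assumes "f summable_on A" "g summable_on A"
  shows "(\<lambda>x. f x - g x) summable_on A"
  using summable_on_add[OF assms(1) summable_on_uminus[THEN iffD2, OF assms(2)]] by simp

lemma my_infsum_diff:
  fixes f g :: "'a \<Rightarrow> real"
  assumes "f summable_on A" "g summable_on A"
  shows "infsum (\<lambda>x. f x - g x) A = infsum f A - infsum g A"
  using infsum_add[OF assms(1) summable_on_uminus[THEN iffD2, OF assms(2)]] infsum_uminus[of g A] by simp

lemma kl_inf:
  assumes "pmf P x \<noteq> 0" "pmf Q x = 0"
  shows "(\<integral>\<^sup>+ y. e2ennreal (max 0 (kl_term P Q y)) \<partial>count_space UNIV) = \<infinity>"
proof -
  let ?g = "\<lambda>y. e2ennreal (max 0 (kl_term P Q y))"
  have "(\<integral>\<^sup>+ y. ?g y * indicator {x} y \<partial>count_space UNIV) \<le> (\<integral>\<^sup>+ y. ?g y \<partial>count_space UNIV)"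
    by (intro nn_integral_mono) (simp split: split_indicator)
  moreover have "(\<integral>\<^sup>+ y. ?g y * indicator {x} y \<partial>count_space UNIV) = ?g x * emeasure (count_space UNIV) {x}"
    by (rule nn_integral_indicator_singleton) simp
  moreover have "?g x = \<infinity>" using assms by (simp add: kl_term_def)
  ultimately show ?thesis by (simp add: top_unique)
qed

lemma kl_div_inf:
  assumes "pmf P x \<noteq> 0" "pmf Q x = 0"
  shows "kl_div P Q = \<infinity>"
proof -
  have "enn2ereal (\<integral>\<^sup>+ x. e2ennreal (max 0 (- kl_term P Q x)) \<partial>count_space UNIV) \<le> enn2ereal 1"
    using kl_neg_le[unfolded less_eq_ennreal.rep_eq] .
  hence "enn2ereal (\<integral>\<^sup>+ x. e2ennreal (max 0 (- kl_term P Q x)) \<partial>count_space UNIV) \<noteq> \<infinity>" by auto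
  thus ?thesis unfolding kl_div_def kl_inf[OF assms] by simp
qed

lemma kl_cases:
  assumes "kl_div P Q \<noteq> \<infinity>"
  shows "(\<forall>x. pmf Q x = 0 \<longrightarrow> pmf P x = 0) \<and> (\<lambda>x. xl (pmf P x) (pmf Q x)) summable_on UNIV
     \<and> kl_div P Q = ereal (\<Sum>\<^sub>\<infinity>x. xl (pmf P x) (pmf Q x))"
proof -
  have ac: "pmf Q x = 0 \<Longrightarrow> pmf P x = 0" for x
    using kl_div_inf[of P x Q] assms by blast
  define f where "f x = xl (pmf P x) (pmf Q x)" for x
  have "enn2ereal (\<integral>\<^sup>+ x. e2ennreal (max 0 (- kl_term P Q x)) \<partial>count_space UNIV) \<le> enn2ereal 1"
    using kl_neg_le[unfolded less_eq_ennreal.rep_eq] .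
  hence fin: "enn2ereal (\<integral>\<^sup>+ x. e2ennreal (max 0 (- kl_term P Q x)) \<partial>count_space UNIV) \<noteq> \<infinity>" by auto
  have "(\<integral>\<^sup>+ x. e2ennreal (max 0 (kl_term P Q x)) \<partial>count_space UNIV) \<noteq> \<infinity>"
  proof
    assume "(\<integral>\<^sup>+ x. e2ennreal (max 0 (kl_term P Q x)) \<partial>count_space UNIV) = \<infinity>"
    hence "kl_div P Q = \<infinity>" using fin unfolding kl_div_def by simp
    thus False using assms by simp
  qed
  moreover have "(\<integral>\<^sup>+ x. e2ennreal (max 0 (kl_term P Q x)) \<partial>count_space UNIV)
      = (\<integral>\<^sup>+ x. ennreal (max 0 (f x)) \<partial>count_space UNIV)"
    by (intro nn_integral_cong) (simp only: kl_term_real[OF ac] f_def e2_max0)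
  ultimately have s1: "(\<lambda>x. max 0 (f x)) summable_on UNIV"
    by (intro nn_summable) auto
  have s2: "(\<lambda>x. max 0 (- f x)) summable_on UNIV"
  proof (rule summable_on_comparison_test[OF pmf_summable_on[of Q]])
    fix x
    have "f x \<ge> pmf P x - pmf Q x" unfolding f_def using ac[of x] by (intro xl_ge) auto
    thus "max 0 (- f x) \<le> pmf Q x" using pmf_nonneg[of P x] pmf_nonneg[of Q x] by linarith
  qed simp
  have "(\<lambda>x. max 0 (f x) + - max 0 (- f x)) summable_on UNIV"
    by (rule summable_on_add[OF s1 summable_on_uminus[THEN iffD2, OF s2]])
  also have "(\<lambda>x. max 0 (f x) + - max 0 (- f x)) = f" by (auto simp: max_def)
  finally have sm: "f summable_on UNIV" .
  show ?thesis using ac sm kl_real[OF ac] unfolding f_def by blast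
qed

lemma kl_nonneg: "kl_div P Q \<ge> 0"
proof (cases "kl_div P Q = \<infinity>")
  case False
  note c = kl_cases[OF False]
  have "(\<Sum>\<^sub>\<infinity>x. pmf P x - pmf Q x) \<le> (\<Sum>\<^sub>\<infinity>x. xl (pmf P x) (pmf Q x))"
    using c by (intro infsum_mono my_summable_diff xl_ge pmf_summable_on) auto
  moreover have "(\<Sum>\<^sub>\<infinity>x. pmf P x - pmf Q x) = 0"
    using my_infsum_diff[OF pmf_summable_on[of P UNIV] pmf_summable_on[of Q UNIV]] pmf_infsum[of P] pmf_infsum[of Q] by simp
  ultimately show ?thesis using c by simp
qed simp



lemma tp_pmf:
  assumes "a \<noteq> b" "0 \<le> t" "t \<le> 1"
  shows "pmf (two_point a b t) x = (if x = b then t else if x = a then 1 - t else 0)"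
proof -
  have "pmf (two_point a b t) x = measure (bernoulli_pmf t) ((\<lambda>c. if c then b else a) -` {x})"
    unfolding two_point_def by (rule pmf_map)
  also have "(\<lambda>c. if c then b else a) -` {x} = (if x = b then {True} else if x = a then {False} else {})"
    using assms(1) by (auto split: if_splits)
  finally show ?thesis using assms by (auto simp: measure_pmf_single)
qed

lemma sum2:
  fixes f :: "'a \<Rightarrow> real"
  assumes "a \<noteq> b" "\<And>x. x \<noteq> a \<Longrightarrow> x \<noteq> b \<Longrightarrow> f x = 0"
  shows "f summable_on UNIV" "infsum f UNIV = f a + f b"
proof -
  have "f summable_on UNIV \<longleftrightarrow> f summable_on {a, b}"
    by (rule summable_on_cong_neutral) (use assms in auto)
  thus "f summable_on UNIV" by simp
  have "infsum f UNIV = infsum f {a, b}"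
    by (rule infsum_cong_neutral) (use assms in auto)
  thus "infsum f UNIV = f a + f b" using assms(1) by simp
qed

lemma tp_kl:
  assumes ab: "a \<noteq> b" and s: "0 \<le> s" "s \<le> 1" and t: "0 < t" "t < 1"
  shows "kl_div (two_point a b s) (two_point a b t) = ereal (xl s t + xl (1 - s) (1 - t))"
proof -
  let ?P = "two_point a b s" and ?Q = "two_point a b t"
  have pP: "pmf ?P x = (if x = b then s else if x = a then 1 - s else 0)" for x
    using tp_pmf[OF ab s] .
  have pQ: "pmf ?Q x = (if x = b then t else if x = a then 1 - t else 0)" for x
    using tp_pmf[OF ab] t by simp
  have ac: "pmf ?Q x = 0 \<Longrightarrow> pmf ?P x = 0" for x
    using t unfolding pP pQ by (auto split: if_splits)
  have z: "xl (pmf ?P x) (pmf ?Q x) = 0" if "x \<noteq> a" "x \<noteq> b" for x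
    using that unfolding pP pQ by (simp add: xl_def)
  have "kl_div ?P ?Q = ereal (\<Sum>\<^sub>\<infinity>x. xl (pmf ?P x) (pmf ?Q x))"
    by (rule kl_real[OF ac sum2(1)[OF ab z]]) 
  also have "(\<Sum>\<^sub>\<infinity>x. xl (pmf ?P x) (pmf ?Q x)) = xl (pmf ?P a) (pmf ?Q a) + xl (pmf ?P b) (pmf ?Q b)"
    by (rule sum2(2)[OF ab z])
  finally show ?thesis using ab unfolding pP pQ by simp
qed

lemma tp_dtv:
  assumes ab: "a \<noteq> b" and "0 \<le> s" "s \<le> 1" "0 \<le> t" "t \<le> 1"
  shows "dtv (two_point a b s) (two_point a b t) = \<bar>s - t\<bar>"
proof -
  let ?P = "two_point a b s" and ?Q = "two_point a b t"
  have pP: "pmf ?P x = (if x = b then s else if x = a then 1 - s else 0)" for x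
    using tp_pmf[OF ab] assms by simp
  have pQ: "pmf ?Q x = (if x = b then t else if x = a then 1 - t else 0)" for x
    using tp_pmf[OF ab] assms by simp
  have z: "\<bar>pmf ?P x - pmf ?Q x\<bar> = 0" if "x \<noteq> a" "x \<noteq> b" for x
    using that unfolding pP pQ by simp
  have "(\<Sum>\<^sub>\<infinity>x. \<bar>pmf ?P x - pmf ?Q x\<bar>) = \<bar>pmf ?P a - pmf ?Q a\<bar> + \<bar>pmf ?P b - pmf ?Q b\<bar>"
    by (rule sum2(2)[OF ab z])
  thus ?thesis using ab unfolding dtv_def pP pQ by simp
qed



lemma tangent:
  fixes t r :: real
  assumes t: "t > 0" and r: "r > 0"
  shows "(t - 1) * ln t \<ge> (ln r + 1 - 1 / r) * t + (- ln r + 1 - r)"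
proof -
  have key: "(t - 1) * (ln t - ln r) \<ge> (t - r) * (r - 1) / r"
  proof (cases "t \<ge> 1")
    case True
    have "ln (r / t) \<le> r / t - 1" using t r by (intro ln_le_minus_one) simp
    hence "ln t - ln r \<ge> 1 - r / t" using t r by (simp add: ln_div)
    hence "(t - 1) * (ln t - ln r) \<ge> (t - 1) * (1 - r / t)" using True by (intro mult_left_mono) auto
    moreover have "(t - 1) * (1 - r / t) - (t - r) * (r - 1) / r = (t - r)^2 / (r * t)"
      using t r by (simp add: field_simps power2_eq_square) 
    moreover have "(t - r)^2 / (r * t) \<ge> 0" using t r by simp
    ultimately show ?thesis by linarith
  next
    case False
    have "ln (t / r) \<le> t / r - 1" using t r by (intro ln_le_minus_one) simp
    hence "ln t - ln r \<le> t / r - 1" using t r by (simp add: ln_div)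
    hence "(t - 1) * (ln t - ln r) \<ge> (t - 1) * (t / r - 1)" using False
      by (intro mult_left_mono_neg) auto
    moreover have "(t - 1) * (t / r - 1) - (t - r) * (r - 1) / r = (t - r)^2 / r"
      using t r by (simp add: field_simps power2_eq_square)
    moreover have "(t - r)^2 / r \<ge> 0" using t r by simp
    ultimately show ?thesis by linarith
  qed
  have "(ln r + 1 - 1 / r) * t + (- ln r + 1 - r) = (t - 1) * ln r + (t - r) * (r - 1) / r"
    using r by (simp add: field_simps)
  thus ?thesis using key by (simp add: algebra_simps)
qed

lemma pointwise:
  fixes p q r :: real
  assumes p: "p \<ge> 0" and q: "q \<ge> 0" and pq: "p = 0 \<longleftrightarrow> q = 0" and r: "r > 0"
  shows "xl p q + xl q p \<ge> (2 - r - 1 / r) / 2 * (p + q) + (ln r + (r - 1 / r) / 2) * \<bar>p - q\<bar>"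
proof (cases "p = 0")
  case True thus ?thesis using pq by (simp add: xl_def)
next
  case False
  hence p: "p > 0" and q: "q > 0" using p q pq by auto
  define t where "t = p / q"
  have t: "t > 0" using p q by (simp add: t_def)
  have g: "xl p q + xl q p = q * ((t - 1) * ln t)"
    using p q unfolding xl_def t_def by (simp add: ln_div field_simps)
  have A: "q * ((t - 1) * ln t) \<ge> q * ((ln r + 1 - 1 / r) * t + (- ln r + 1 - r))"
    using tangent[OF t r] q by (intro mult_left_mono) auto
  have r': "1 / r > 0" using r by simp
  have B: "q * ((t - 1) * ln t) \<ge> q * ((ln (1/r) + 1 - 1 / (1/r)) * t + (- ln (1/r) + 1 - 1/r))"
    using tangent[OF t r'] q by (intro mult_left_mono) auto
  have ln1: "ln (1/r) = - ln r" using r by (simp add: ln_div)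
  show ?thesis
  proof (cases "p \<ge> q")
    case True
    have "(2 - r - 1 / r) / 2 * (p + q) + (ln r + (r - 1 / r) / 2) * \<bar>p - q\<bar>
        = q * ((ln r + 1 - 1 / r) * t + (- ln r + 1 - r))"
      using True q r unfolding t_def by (simp add: field_simps)
    thus ?thesis using A g by simp
  next
    case False
    have "(2 - r - 1 / r) / 2 * (p + q) + (ln r + (r - 1 / r) / 2) * \<bar>p - q\<bar>
        = q * ((ln (1/r) + 1 - 1 / (1/r)) * t + (- ln (1/r) + 1 - 1/r))"
      using False q r unfolding t_def ln1 by (simp add: field_simps)
    thus ?thesis using B g by simp
  qed
qed



lemma jeff_inf:
  assumes "kl_div P Q = \<infinity> \<or> kl_div Q P = \<infinity>"
  shows "jeffreys P Q = \<infinity>"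
  using assms kl_nonneg[of P Q] kl_nonneg[of Q P] unfolding jeffreys_def
  by (auto simp: ereal_divide_eq)

lemma jeff_ge: "jeffreys P Q \<ge> kl_div P Q / 2"
proof -
  have "kl_div P Q + 0 \<le> kl_div P Q + kl_div Q P"
    using kl_nonneg[of Q P] by (intro add_left_mono) auto
  thus ?thesis unfolding jeffreys_def by (intro ereal_divide_right_mono) auto
qed

lemma abs_diff_summable: "(\<lambda>x. \<bar>pmf P x - pmf Q x\<bar>) summable_on UNIV"
proof (rule summable_on_comparison_test[OF summable_on_add[OF pmf_summable_on[of P] pmf_summable_on[of Q]]])
  fix x show "\<bar>pmf P x - pmf Q x\<bar> \<le> pmf P x + pmf Q x" by (simp add: abs_le_iff) 
qed simp

lemma dtv_nonneg: "dtv P Q \<ge> 0"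
  unfolding dtv_def by (simp add: infsum_nonneg)

lemma J_lower:
  assumes e: "dtv P Q = \<epsilon>" "\<epsilon> < 1"
  shows "jeffreys P Q \<ge> ereal (\<epsilon> * ln ((1 + \<epsilon>) / (1 - \<epsilon>)))"
proof (cases "kl_div P Q = \<infinity> \<or> kl_div Q P = \<infinity>")
  case True thus ?thesis using jeff_inf[OF True] by simp
next
  case False
  hence c1: "(\<forall>x. pmf Q x = 0 \<longrightarrow> pmf P x = 0) \<and> (\<lambda>x. xl (pmf P x) (pmf Q x)) summable_on UNIV
     \<and> kl_div P Q = ereal (\<Sum>\<^sub>\<infinity>x. xl (pmf P x) (pmf Q x))"
   and c2: "(\<forall>x. pmf P x = 0 \<longrightarrow> pmf Q x = 0) \<and> (\<lambda>x. xl (pmf Q x) (pmf P x)) summable_on UNIV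
     \<and> kl_div Q P = ereal (\<Sum>\<^sub>\<infinity>x. xl (pmf Q x) (pmf P x))"
    using kl_cases by blast+
  have e0: "\<epsilon> \<ge> 0" using e dtv_nonneg by metis
  define r where "r = (1 + \<epsilon>) / (1 - \<epsilon>)"
  have r: "r > 0" using e e0 by (simp add: r_def)
  define c1 where "c1 = (2 - r - 1 / r) / 2"
  define c2 where "c2 = ln r + (r - 1 / r) / 2"
  define S1 where "S1 = (\<Sum>\<^sub>\<infinity>x. xl (pmf P x) (pmf Q x))"
  define S2 where "S2 = (\<Sum>\<^sub>\<infinity>x. xl (pmf Q x) (pmf P x))"
  have J: "jeffreys P Q = ereal ((S1 + S2) / 2)"
    using c1 c2 unfolding jeffreys_def S1_def S2_def by simp
  have sA: "(\<lambda>x. c1 * (pmf P x + pmf Q x)) summable_on UNIV"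
    by (intro summable_on_cmult_right summable_on_add pmf_summable_on)
  have sB: "(\<lambda>x. c2 * \<bar>pmf P x - pmf Q x\<bar>) summable_on UNIV"
    by (intro summable_on_cmult_right abs_diff_summable)
  have "S1 + S2 = (\<Sum>\<^sub>\<infinity>x. xl (pmf P x) (pmf Q x) + xl (pmf Q x) (pmf P x))"
    unfolding S1_def S2_def using c1 c2 by (simp add: infsum_add)
  also have "\<dots> \<ge> (\<Sum>\<^sub>\<infinity>x. c1 * (pmf P x + pmf Q x) + c2 * \<bar>pmf P x - pmf Q x\<bar>)"
  proof (rule infsum_mono)
    show "(\<lambda>x. c1 * (pmf P x + pmf Q x) + c2 * \<bar>pmf P x - pmf Q x\<bar>) summable_on UNIV"
      by (rule summable_on_add[OF sA sB])
    show "(\<lambda>x. xl (pmf P x) (pmf Q x) + xl (pmf Q x) (pmf P x)) summable_on UNIV"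
      using c1 c2 by (intro summable_on_add) auto
    fix x
    show "c1 * (pmf P x + pmf Q x) + c2 * \<bar>pmf P x - pmf Q x\<bar> \<le> xl (pmf P x) (pmf Q x) + xl (pmf Q x) (pmf P x)"
      unfolding c1_def c2_def using c1 c2 by (intro pointwise r) auto
  qed
  also have "(\<Sum>\<^sub>\<infinity>x. c1 * (pmf P x + pmf Q x) + c2 * \<bar>pmf P x - pmf Q x\<bar>)
      = c1 * ((\<Sum>\<^sub>\<infinity>x. pmf P x) + (\<Sum>\<^sub>\<infinity>x. pmf Q x)) + c2 * (\<Sum>\<^sub>\<infinity>x. \<bar>pmf P x - pmf Q x\<bar>)"
    using infsum_add[OF sA sB] infsum_cmult_right[of c1 "\<lambda>x. pmf P x + pmf Q x" UNIV]
      infsum_cmult_right[of c2 "\<lambda>x. \<bar>pmf P x - pmf Q x\<bar>" UNIV]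
      infsum_add[OF pmf_summable_on[of P] pmf_summable_on[of Q]]
      summable_on_add[OF pmf_summable_on[of P] pmf_summable_on[of Q]] abs_diff_summable[of P Q]
    by simp
  also have "\<dots> = 2 * c1 + 2 * \<epsilon> * c2"
    using pmf_infsum[of P] pmf_infsum[of Q] e(1) unfolding dtv_def by simp
  also have "2 * c1 + 2 * \<epsilon> * c2 = 2 * (\<epsilon> * ln r)"
  proof -
    have "1 - \<epsilon> \<noteq> 0" "1 + \<epsilon> \<noteq> 0" using e e0 by auto
    hence h1: "r * (1 - \<epsilon>) = 1 + \<epsilon>" and h2: "(1 / r) * (1 + \<epsilon>) = 1 - \<epsilon>"
      unfolding r_def by (simp_all add: field_simps)
    have "2 - r - 1 / r + 2 * \<epsilon> * ((r - 1 / r) / 2) = 2 - r * (1 - \<epsilon>) - (1 / r) * (1 + \<epsilon>)"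
      using r by (simp add: field_simps)
    hence "2 - r - 1 / r + 2 * \<epsilon> * ((r - 1 / r) / 2) = 0" using h1 h2 by simp
    moreover have "2 * c1 + 2 * \<epsilon> * c2 = (2 - r - 1 / r + 2 * \<epsilon> * ((r - 1 / r) / 2)) + 2 * (\<epsilon> * ln r)"
      using r unfolding c1_def c2_def by (simp add: field_simps)
    ultimately show ?thesis by simp
  qed
  finally have "\<epsilon> * ln r \<le> (S1 + S2) / 2" by simp
  thus ?thesis unfolding J r_def by simp
qed



lemma part1:
  fixes a b :: "'a :: countable"
  assumes ab: "a \<noteq> b" and e: "0 \<le> \<epsilon>" "\<epsilon> < 1"
  shows "Inf {jeffreys P Q | P Q :: 'a pmf. dtv P Q = \<epsilon>} = ereal (\<epsilon> * ln ((1 + \<epsilon>) / (1 - \<epsilon>)))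
      \<and> dtv (two_point a b ((1 + \<epsilon>) / 2)) (two_point a b ((1 - \<epsilon>) / 2)) = \<epsilon>
      \<and> jeffreys (two_point a b ((1 + \<epsilon>) / 2)) (two_point a b ((1 - \<epsilon>) / 2))
          = ereal (\<epsilon> * ln ((1 + \<epsilon>) / (1 - \<epsilon>)))"
proof -
  define s where "s = (1 + \<epsilon>) / 2"
  define t where "t = (1 - \<epsilon>) / 2"
  define V where "V = \<epsilon> * ln ((1 + \<epsilon>) / (1 - \<epsilon>))"
  have s: "0 < s" "s < 1" and t: "0 < t" "t < 1" using e by (auto simp: s_def t_def)
  have st: "1 - s = t" "1 - t = s" unfolding s_def t_def by (simp_all add: field_simps)
  have smt: "s - t = \<epsilon>" unfolding s_def t_def by (simp add: field_simps)
  have d: "dtv (two_point a b s) (two_point a b t) = \<epsilon>"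
    using tp_dtv[OF ab, of s t] s t e smt by simp
  have x: "xl s t + xl t s = V"
  proof -
    have "xl s t + xl t s = s * ln (s / t) + t * ln (t / s)" using s t by (simp add: xl_def)
    also have "ln (t / s) = - ln (s / t)" using s t by (simp add: ln_div)
    also have "s / t = (1 + \<epsilon>) / (1 - \<epsilon>)" using e by (simp add: s_def t_def field_simps)
    finally have "xl s t + xl t s = (s - t) * ln ((1 + \<epsilon>) / (1 - \<epsilon>))" by (simp add: algebra_simps)
    thus ?thesis unfolding V_def smt .
  qed
  have k1: "kl_div (two_point a b s) (two_point a b t) = ereal V"
  proof -
    have "kl_div (two_point a b s) (two_point a b t) = ereal (xl s t + xl (1 - s) (1 - t))"
      by (rule tp_kl[OF ab]) (use s t in auto)
    thus ?thesis unfolding st x .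
  qed
  have k2: "kl_div (two_point a b t) (two_point a b s) = ereal V"
  proof -
    have "kl_div (two_point a b t) (two_point a b s) = ereal (xl t s + xl (1 - t) (1 - s))"
      by (rule tp_kl[OF ab]) (use s t in auto)
    thus ?thesis unfolding st using x by (simp add: add.commute)
  qed
  have J: "jeffreys (two_point a b s) (two_point a b t) = ereal V"
    unfolding jeffreys_def k1 k2 by simp
  have "Inf {jeffreys P Q | P Q :: 'a pmf. dtv P Q = \<epsilon>} = ereal V"
  proof (rule antisym)
    show "Inf {jeffreys P Q | P Q :: 'a pmf. dtv P Q = \<epsilon>} \<le> ereal V"
    proof (rule Inf_lower2[of "jeffreys (two_point a b s) (two_point a b t)"])
      show "jeffreys (two_point a b s) (two_point a b t) \<in> {jeffreys P Q | P Q :: 'a pmf. dtv P Q = \<epsilon>}"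
        using d by blast
    qed (use J in simp)
    show "ereal V \<le> Inf {jeffreys P Q | P Q :: 'a pmf. dtv P Q = \<epsilon>}"
      by (rule Inf_greatest) (use J_lower e in \<open>auto simp: V_def\<close>)
  qed
  thus ?thesis using d J unfolding s_def t_def V_def by simp
qed

lemma part3:
  fixes a b :: "'a :: countable"
  assumes ab: "a \<noteq> b" and e: "0 < \<epsilon>" "\<epsilon> < 1"
  shows "Sup {jeffreys P Q | P Q :: 'a pmf. dtv P Q = \<epsilon>} = \<infinity>"
proof -
  have d: "dtv (two_point a b \<epsilon>) (two_point a b 0) = \<epsilon>"
    using tp_dtv[OF ab] e by simp
  have "kl_div (two_point a b \<epsilon>) (two_point a b 0) = \<infinity>"
    by (rule kl_div_inf[of _ b]) (use tp_pmf[OF ab] e in simp_all)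
  hence "jeffreys (two_point a b \<epsilon>) (two_point a b 0) = \<infinity>" using jeff_inf by blast
  hence "\<infinity> \<le> Sup {jeffreys P Q | P Q :: 'a pmf. dtv P Q = \<epsilon>}"
    by (intro Sup_upper) (use d in force)
  thus ?thesis by (simp add: top_unique)
qed

lemma part4:
  fixes a b :: "'a :: countable"
  assumes ab: "a \<noteq> b" and e: "0 < \<epsilon>"
  shows "Sup {jeffreys P Q | P Q :: 'a pmf. kl_div P Q = ereal \<epsilon>} = \<infinity>"
proof -
  define t where "t = 1 - exp (- \<epsilon>)"
  have t: "0 < t" "t < 1" using e by (auto simp: t_def)
  have "kl_div (two_point a b 0) (two_point a b t) = ereal (xl 0 t + xl 1 (1 - t))"
    using tp_kl[OF ab _ _ t] by simp
  also have "xl 0 t + xl 1 (1 - t) = \<epsilon>" by (simp add: xl_def t_def ln_div)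
  finally have k: "kl_div (two_point a b 0) (two_point a b t) = ereal \<epsilon>" .
  have "kl_div (two_point a b t) (two_point a b 0) = \<infinity>"
    by (rule kl_div_inf[of _ b]) (use tp_pmf[OF ab] t in simp_all)
  hence "jeffreys (two_point a b 0) (two_point a b t) = \<infinity>" using jeff_inf by blast
  hence "\<infinity> \<le> Sup {jeffreys P Q | P Q :: 'a pmf. kl_div P Q = ereal \<epsilon>}"
    by (intro Sup_upper) (use k in force)
  thus ?thesis by (simp add: top_unique)
qed



lemma part2_witness:
  fixes a b :: "'a :: countable"
  assumes ab: "a \<noteq> b" and e: "0 < \<epsilon>" and p: "0 < p" "p \<le> 1/2"
  shows "\<exists>P Q :: 'a pmf. kl_div P Q = ereal \<epsilon> \<and> jeffreys P Q \<le> ereal (\<epsilon> / 2 + p)"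
proof -
  define F where "F d = p * ln (p / d) + (1 - p) * ln ((1 - p) / (1 - d))" for d
  define d0 where "d0 = p * exp (- (\<epsilon> - (1 - p) * ln (1 - p)) / p)"
  have p1: "1 - p > 0" using p by simp
  have lnneg: "ln (1 - p) < 0" using p by simp
  have "(1 - p) * ln (1 - p) < 0" using p1 lnneg by (simp add: mult_pos_neg)
  hence num: "\<epsilon> - (1 - p) * ln (1 - p) > 0" using e by linarith
  hence "- (\<epsilon> - (1 - p) * ln (1 - p)) / p < 0" using p by (simp add: divide_neg_pos)
  hence "exp (- (\<epsilon> - (1 - p) * ln (1 - p)) / p) < 1" by simp
  hence d0: "0 < d0" "d0 < p" using p unfolding d0_def by auto
  have Fd0: "F d0 \<ge> \<epsilon>"
  proof -
    have "ln (p / d0) = (\<epsilon> - (1 - p) * ln (1 - p)) / p"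
      using p unfolding d0_def by (simp add: ln_div ln_mult) (simp add: field_simps)
    hence A: "p * ln (p / d0) = \<epsilon> - (1 - p) * ln (1 - p)" using p by simp
    have "(1 - p) / (1 - d0) \<ge> 1 - p" using d0 p1 p
      by (simp add: le_divide_eq mult_le_cancel_left1) 
    hence "ln ((1 - p) / (1 - d0)) \<ge> ln (1 - p)" using p1 by (subst ln_le_cancel_iff) auto
    hence "(1 - p) * ln ((1 - p) / (1 - d0)) \<ge> (1 - p) * ln (1 - p)" using p1 by (intro mult_left_mono) auto
    thus ?thesis using A unfolding F_def by simp
  qed
  have Fp: "F p \<le> \<epsilon>" using p e unfolding F_def by simp
  have cont: "continuous_on {d0..p} F"
    unfolding F_def using d0 p by (intro continuous_intros) auto
  obtain d where d: "d0 \<le> d" "d \<le> p" "F d = \<epsilon>"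
    using IVT2'[of F p \<epsilon> d0, OF Fp Fd0 _ cont] d0 by auto
  have dpos: "0 < d" "d < 1" using d d0 p by auto
  have k1: "kl_div (two_point a b p) (two_point a b d) = ereal \<epsilon>"
  proof -
    have "kl_div (two_point a b p) (two_point a b d) = ereal (xl p d + xl (1 - p) (1 - d))"
      by (rule tp_kl[OF ab]) (use p dpos in auto)
    also have "xl p d + xl (1 - p) (1 - d) = F d" unfolding xl_def F_def using p by simp
    finally show ?thesis using d by simp
  qed
  have k2: "kl_div (two_point a b d) (two_point a b p) = ereal (xl d p + xl (1 - d) (1 - p))"
    by (rule tp_kl[OF ab]) (use p dpos in auto)
  have b1: "xl d p \<le> 0"
  proof -
    have "ln (d / p) \<le> 0" using dpos d p by (simp add: divide_le_eq_1)
    thus ?thesis unfolding xl_def using dpos by (simp add: mult_nonneg_nonpos)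
  qed
  have b2: "xl (1 - d) (1 - p) \<le> 2 * p"
  proof -
    have "ln ((1 - d) / (1 - p)) \<le> (1 - d) / (1 - p) - 1"
      using dpos p1 by (intro ln_le_minus_one) simp
    also have "(1 - d) / (1 - p) - 1 = (p - d) / (1 - p)" using p1 by (simp add: field_simps)
    finally have "(1 - d) * ln ((1 - d) / (1 - p)) \<le> (1 - d) * ((p - d) / (1 - p))"
      using dpos by (intro mult_left_mono) auto
    also have "\<dots> \<le> 1 * (p / (1 - p))"
      using dpos d p1 p by (intro mult_mono divide_right_mono) auto
    also have "p / (1 - p) \<le> 2 * p" using p p1 by (simp add: divide_le_eq algebra_simps)
    finally show ?thesis unfolding xl_def using dpos by simp
  qed
  have "jeffreys (two_point a b p) (two_point a b d) = ereal ((\<epsilon> + (xl d p + xl (1 - d) (1 - p))) / 2)"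
    unfolding jeffreys_def k1 k2 by simp
  also have "\<dots> \<le> ereal (\<epsilon> / 2 + p)" using b1 b2 by simp
  finally show ?thesis using k1 by blast
qed

lemma part2:
  fixes a b :: "'a :: countable"
  assumes ab: "a \<noteq> b" and e: "0 < \<epsilon>"
  shows "Inf {jeffreys P Q | P Q :: 'a pmf. kl_div P Q = ereal \<epsilon>} = ereal (\<epsilon> / 2)"
proof (rule antisym)
  show "ereal (\<epsilon> / 2) \<le> Inf {jeffreys P Q | P Q :: 'a pmf. kl_div P Q = ereal \<epsilon>}"
  proof (rule Inf_greatest)
    fix y assume "y \<in> {jeffreys P Q | P Q :: 'a pmf. kl_div P Q = ereal \<epsilon>}"
    then obtain P Q :: "'a pmf" where "y = jeffreys P Q" "kl_div P Q = ereal \<epsilon>" by blast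
    thus "ereal (\<epsilon> / 2) \<le> y" using jeff_ge[of P Q] by simp
  qed
  show "Inf {jeffreys P Q | P Q :: 'a pmf. kl_div P Q = ereal \<epsilon>} \<le> ereal (\<epsilon> / 2)"
  proof (rule ereal_le_epsilon2)
    fix \<eta> :: real assume eta: "0 < \<eta>"
    define p where "p = min (1/2) \<eta>"
    have p: "0 < p" "p \<le> 1/2" "p \<le> \<eta>" using eta by (auto simp: p_def)
    obtain P Q :: "'a pmf" where PQ: "kl_div P Q = ereal \<epsilon>" "jeffreys P Q \<le> ereal (\<epsilon> / 2 + p)"
      using part2_witness[OF ab e p(1,2)] by blast
    have "Inf {jeffreys P Q | P Q :: 'a pmf. kl_div P Q = ereal \<epsilon>} \<le> jeffreys P Q"
      by (rule Inf_lower) (use PQ in blast)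
    also have "\<dots> \<le> ereal (\<epsilon> / 2 + p)" by (rule PQ(2))
    also have "\<dots> \<le> ereal (\<epsilon> / 2) + ereal \<eta>" using p by simp
    finally show "Inf {jeffreys P Q | P Q :: 'a pmf. kl_div P Q = ereal \<epsilon>} \<le> ereal (\<epsilon> / 2) + ereal \<eta>" .
  qed
qed


theorem proposition4:
  fixes a b :: "'a :: countable"
  assumes ab: "a \<noteq> b"
  shows
    "(\<forall>\<epsilon>::real. 0 \<le> \<epsilon> \<and> \<epsilon> < 1 \<longrightarrow>
        Inf {jeffreys P Q | P Q :: 'a pmf. dtv P Q = \<epsilon>}
          = ereal (\<epsilon> * ln ((1 + \<epsilon>) / (1 - \<epsilon>)))
      \<and> dtv (two_point a b ((1 + \<epsilon>) / 2)) (two_point a b ((1 - \<epsilon>) / 2)) = \<epsilon>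
      \<and> jeffreys (two_point a b ((1 + \<epsilon>) / 2)) (two_point a b ((1 - \<epsilon>) / 2))
          = ereal (\<epsilon> * ln ((1 + \<epsilon>) / (1 - \<epsilon>))))
   \<and> (\<forall>\<epsilon>::real. 0 < \<epsilon> \<longrightarrow>
        Inf {jeffreys P Q | P Q :: 'a pmf. kl_div P Q = ereal \<epsilon>} = ereal (\<epsilon> / 2))
   \<and> (\<forall>\<epsilon>::real. 0 < \<epsilon> \<and> \<epsilon> < 1 \<longrightarrow>
        Sup {jeffreys P Q | P Q :: 'a pmf. dtv P Q = \<epsilon>} = \<infinity>)
   \<and> (\<forall>\<epsilon>::real. 0 < \<epsilon> \<longrightarrow>
        Sup {jeffreys P Q | P Q :: 'a pmf. kl_div P Q = ereal \<epsilon>} = \<infinity>)"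
  using part1[OF ab] part2[OF ab] part3[OF ab] part4[OF ab] by blast

end
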